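(* Let $G$ be a finite abelian group, $k\ge d+1\ge2$ integers, and let $V_0=\{(0,1),\dots,(0,k)\}$ and $I=\{\iota_1,\dots,\iota_{d+1}\}$ be disjoint index sets. For $\omega\in\{0,1\}^{d+1}\setminus\{0\}$ let $\phi_\omega:G^{V_0\cup I}\to G$ be the linear form $$\phi_\omega(\mathbf{x})=\sum_{i=1}^{d+1}\big((1-\omega_i)x_{(0,i)}+\omega_i x_{\iota_i}\big)+\sum_{i=d+2}^{k}x_{(0,i)},$$ and let $\Phi_1=\{\phi_\omega:\omega\in\{0,1\}^{d+1}\setminus\{0\}\}$. Then for every $f:G\to[-1,1]$, $$\|f\|_{\square(\Phi_1)}\ge\|f\|_{U^{d+1}}^{2^{d+1}}.$$
   Context: For a linear system $\Phi$ of linear forms $G^{W}\to G$ with $0/1$ coefficients (each determined by its support $\mathrm{supp}(\phi)\subseteq W$ via $\phi(\mathbf{x})=\sum_{v\in\mathrm{supp}(\phi)}x_v$), let $V(\Phi)=V_0\cup\bigcup_{\phi\in\Phi}\mathrm{supp}(\phi)$ and define, for $f:G\to\mathbb{R}$, $$\|f\|_{\square(\Phi)}=\max_{u_\phi:G\to[-1,1]\ (\phi\in\Phi)}\mathbb{E}_{\mathbf{x}\in G^{V(\Phi)}}\Big[f\Big(\sum_{v\in V_0}x_v\Big)\prod_{\phi\in\Phi}u_\phi(\phi(\mathbf{x}))\Big].$$ $\|f\|_{U^{m}}=\big(\mathbb{E}_{x,h_1,\dots,h_m\in G}\prod_{\omega\in\{0,1\}^m}f(x+\sum_i\omega_ih_i)\big)^{1/2^m}$.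 *)

theory Defs
  imports Complex_Main "HOL-Library.FuncSet"
begin

definition avg :: "'b set \<Rightarrow> ('b \<Rightarrow> real) \<Rightarrow> real" where
  "avg A g = (\<Sum>a\<in>A. g a) / real (card A)"

text \<open>A linear form with 0/1 coefficients is identified with its support
  (a set of variables); a linear system is a set of supports.
  V(Phi) = V0 union the union of all supports.\<close>
definition sys_vars :: "'v set \<Rightarrow> 'v set set \<Rightarrow> 'v set" where
  "sys_vars V0 Phi = V0 \<union> \<Union>Phi"

text \<open>The box norm of f relative to the system Phi (the maximum is written as a
  supremum; it is attained since the objective is continuous on a compact set).\<close>
definition box_norm :: "'v set \<Rightarrow> 'v set set \<Rightarrow> ('a::{ab_group_add,finite} \<Rightarrow> real) \<Rightarrow> real" where
  "box_norm V0 Phi f = Sup {avg (PiE (sys_vars V0 Phi) (\<lambda>_. UNIV))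
        (\<lambda>x. f (\<Sum>v\<in>V0. x v) * (\<Prod>\<phi>\<in>Phi. u \<phi> (\<Sum>v\<in>\<phi>. x v)))
      | u :: 'v set \<Rightarrow> 'a \<Rightarrow> real. \<forall>\<phi>\<in>Phi. \<forall>y. u \<phi> y \<in> {-1..1}}"

text \<open>Gowers U^m norm; omega in {0,1}^m is encoded as the subset T of {1..m}
  of coordinates equal to 1.\<close>
definition gowers_norm :: "nat \<Rightarrow> ('a::{ab_group_add,finite} \<Rightarrow> real) \<Rightarrow> real" where
  "gowers_norm m f = (avg (UNIV \<times> PiE {1..m} (\<lambda>_. UNIV))
      (\<lambda>(x, h). \<Prod>T\<in>Pow {1..m}. f (x + (\<Sum>i\<in>T. h i)))) powr (1 / 2 ^ m)"

text \<open>Variables: (0,i) for i in {1..k} form V0; iota_i is encoded as (1,i).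
  Support of phi_omega for omega : {1..d+1} -> {0,1}.\<close>
definition phi_supp :: "nat \<Rightarrow> nat \<Rightarrow> (nat \<Rightarrow> nat) \<Rightarrow> (nat \<times> nat) set" where
  "phi_supp k d \<omega> =
     {(0, i) | i. 1 \<le> i \<and> i \<le> d + 1 \<and> \<omega> i = 0}
   \<union> {(1, i) | i. 1 \<le> i \<and> i \<le> d + 1 \<and> \<omega> i = 1}
   \<union> {(0, i) | i. d + 2 \<le> i \<and> i \<le> k}"

definition V0_set :: "nat \<Rightarrow> (nat \<times> nat) set" where
  "V0_set k = {(0, i) | i. 1 \<le> i \<and> i \<le> k}"

definition Phi1 :: "nat \<Rightarrow> nat \<Rightarrow> (nat \<times> nat) set set" where
  "Phi1 k d = phi_supp k d ` (({1..d+1} \<rightarrow>\<^sub>E {0, 1}) - {(\<lambda>i\<in>{1..d+1}. 0)})"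

end

theory Submission imports Defs begin

lemma prod_pow_insert:
  fixes f :: "'a::{ab_group_add,finite} \<Rightarrow> real"
  assumes "finite I" "a \<notin> I"
  shows "(\<Prod>T\<in>Pow (insert a I). f (y + (\<Sum>i\<in>T. h i)))
       = (\<Prod>T\<in>Pow I. f (y + (\<Sum>i\<in>T. h i))) * (\<Prod>T\<in>Pow I. f ((y + h a) + (\<Sum>i\<in>T. h i)))"
proof -
  have fin: "finite (Pow I)" using assms by simp
  have disj: "Pow I \<inter> insert a ` Pow I = {}" using assms by auto
  have inj: "inj_on (insert a) (Pow I)" using assms unfolding inj_on_def by (metis PowD insert_ident subset_iff)
  have "(\<Prod>T\<in>Pow (insert a I). f (y + (\<Sum>i\<in>T. h i)))
     = (\<Prod>T\<in>Pow I. f (y + (\<Sum>i\<in>T. h i))) * (\<Prod>T\<in>insert a ` Pow I. f (y + (\<Sum>i\<in>T. h i)))"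
    unfolding Pow_insert using fin disj by (simp add: prod.union_disjoint)
  also have "(\<Prod>T\<in>insert a ` Pow I. f (y + (\<Sum>i\<in>T. h i))) = (\<Prod>T\<in>Pow I. f (y + (\<Sum>i\<in>insert a T. h i)))"
    using inj by (simp add: prod.reindex)
  also have "\<dots> = (\<Prod>T\<in>Pow I. f ((y + h a) + (\<Sum>i\<in>T. h i)))"
  proof (rule prod.cong[OF refl])
    fix T assume "T \<in> Pow I"
    then have "finite T" "a \<notin> T" using assms finite_subset by auto
    then show "f (y + (\<Sum>i\<in>insert a T. h i)) = f ((y + h a) + (\<Sum>i\<in>T. h i))"
      by (simp add: add.assoc)
  qed
  finally show ?thesis .
qed

lemma sum_translate_univ:
  fixes g :: "'a::{ab_group_add,finite} \<Rightarrow> real"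
  shows "(\<Sum>t\<in>UNIV. g (y + t)) = (\<Sum>z\<in>UNIV. g z)"
  by (rule sum.reindex_bij_witness[where j = "\<lambda>t. y + t" and i = "\<lambda>z. z - y"]) auto

lemma gowers_sum_nonneg:
  fixes f :: "'a::{ab_group_add,finite} \<Rightarrow> real"
  assumes "finite I" "a \<notin> I"
  shows "0 \<le> (\<Sum>(y,h)\<in>UNIV \<times> PiE (insert a I) (\<lambda>_. UNIV). \<Prod>T\<in>Pow (insert a I). f (y + (\<Sum>i\<in>T. h i)))"
proof -
  define g where "g h' z = (\<Prod>T\<in>Pow I. f (z + (\<Sum>i\<in>T. h' i)))" for h' z
  have "(\<Sum>(y,h)\<in>UNIV \<times> PiE (insert a I) (\<lambda>_. UNIV). \<Prod>T\<in>Pow (insert a I). f (y + (\<Sum>i\<in>T. h i)))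
      = (\<Sum>(h',(y,t))\<in>PiE I (\<lambda>_. UNIV) \<times> (UNIV \<times> UNIV). g h' y * g h' (y + t))"
  proof (rule sum.reindex_bij_witness[where j = "\<lambda>(y,h). (restrict h I, (y, h a))" and i = "\<lambda>(h',(y,t)). (y, h'(a:=t))"])
    fix p :: "'a \<times> ('b \<Rightarrow> 'a)" assume p: "p \<in> UNIV \<times> PiE (insert a I) (\<lambda>_. UNIV)"
    obtain y h where ph: "p = (y,h)" by fastforce
    have "h \<in> PiE (insert a I) (\<lambda>_. UNIV)" using p ph by auto
    then have "(restrict h I)(a := h a) = h"
      by (auto simp: fun_eq_iff PiE_iff extensional_def)
    then show "(\<lambda>(h',(y,t)). (y, h'(a:=t))) ((\<lambda>(y,h). (restrict h I, (y, h a))) p) = p"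
      using ph by simp
    show "(\<lambda>(y,h). (restrict h I, (y, h a))) p \<in> PiE I (\<lambda>_. UNIV) \<times> (UNIV \<times> UNIV)"
      using ph by auto
    have "g (restrict h I) z = (\<Prod>T\<in>Pow I. f (z + (\<Sum>i\<in>T. h i)))" for z
      unfolding g_def by (intro prod.cong refl arg_cong[where f=f] arg_cong2[where f="(+)"] sum.cong) auto
    then show "(\<lambda>(h',(y,t)). g h' y * g h' (y + t)) ((\<lambda>(y,h). (restrict h I, (y, h a))) p) =
      (\<lambda>(y,h). \<Prod>T\<in>Pow (insert a I). f (y + (\<Sum>i\<in>T. h i))) p"
      using ph prod_pow_insert[OF assms, of f y h] by simp
  next
    fix q :: "('b \<Rightarrow> 'a) \<times> 'a \<times> 'a" assume q: "q \<in> PiE I (\<lambda>_. UNIV) \<times> (UNIV \<times> (UNIV::'a set))"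
    obtain h' y t where qh: "q = (h',(y,t))" by (cases q) auto
    have h': "h' \<in> PiE I (\<lambda>_. UNIV)" using q qh by auto
    then have "restrict (h'(a:=t)) I = h'" using assms(2)
      by (auto simp: fun_eq_iff PiE_iff extensional_def)
    then show "(\<lambda>(y,h). (restrict h I, (y, h a))) ((\<lambda>(h',(y,t)). (y, h'(a:=t))) q) = q"
      using qh by simp
    show "(\<lambda>(h',(y,t)). (y, h'(a:=t))) q \<in> UNIV \<times> PiE (insert a I) (\<lambda>_. UNIV)"
      using qh h' by (auto simp: PiE_iff extensional_def)
  qed
  also have "\<dots> = (\<Sum>h'\<in>PiE I (\<lambda>_. UNIV). \<Sum>y\<in>UNIV. \<Sum>t\<in>UNIV. g h' y * g h' (y + t))"
    by (simp add: sum.cartesian_product)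
  also have "\<dots> = (\<Sum>h'\<in>PiE I (\<lambda>_. UNIV). (\<Sum>y\<in>UNIV. g h' y)^2)"
  proof (rule sum.cong[OF refl])
    fix h'
    have "(\<Sum>y\<in>UNIV. \<Sum>t\<in>UNIV. g h' y * g h' (y + t)) = (\<Sum>y\<in>UNIV. g h' y * (\<Sum>t\<in>UNIV. g h' (y + t)))"
      by (simp add: sum_distrib_left)
    also have "\<dots> = (\<Sum>y\<in>UNIV. g h' y * (\<Sum>z\<in>UNIV. g h' z))"
      by (simp add: sum_translate_univ)
    also have "\<dots> = (\<Sum>y\<in>UNIV. g h' y)^2"
      by (simp add: sum_distrib_right power2_eq_square)
    finally show "(\<Sum>y\<in>UNIV. \<Sum>t\<in>UNIV. g h' y * g h' (y + t)) = (\<Sum>y\<in>UNIV. g h' y)^2" .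
  qed
  also have "\<dots> \<ge> 0" by (simp add: sum_nonneg)
  finally show ?thesis .
qed

lemma powr_pow_cancel:
  fixes x :: real assumes "x \<ge> 0"
  shows "(x powr (1 / 2 ^ n)) ^ (2 ^ n) = x"
proof (cases "x = 0")
  case True then show ?thesis by simp
next
  case False
  then have xp: "x > 0" using assms by simp
  have "(x powr (1 / 2 ^ n)) ^ (2 ^ n) = (x powr (1 / 2 ^ n)) powr (real (2 ^ n))"
    by (rule powr_realpow[symmetric]) (use xp in simp)
  also have "\<dots> = x powr ((1 / 2 ^ n) * real (2 ^ n))" by (simp add: powr_powr)
  also have "\<dots> = x" using xp by simp
  finally show ?thesis .
qed

lemma avg_le_1:
  assumes "\<And>x. x \<in> A \<Longrightarrow> g x \<le> 1" "finite A"
  shows "avg A g \<le> 1"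
proof (cases "A = {}")
  case True then show ?thesis by (simp add: avg_def)
next
  case False
  then have "card A > 0" using assms by auto
  moreover have "sum g A \<le> real (card A)" using sum_mono[of A g "\<lambda>_. 1"] assms by simp
  ultimately show ?thesis by (simp add: avg_def)
qed

theorem mainTheorem7:
  fixes f :: "'a::{ab_group_add,finite} \<Rightarrow> real" and k d :: nat
  assumes "k \<ge> d + 1" and "d + 1 \<ge> 2"
    and "\<forall>y. f y \<in> {-1..1}"
  shows "box_norm (V0_set k) (Phi1 k d) f \<ge> gowers_norm (d + 1) f ^ (2 ^ (d + 1))"
proof -
  define I1 where "I1 = {1..d+1}"
  define V0 where "V0 = V0_set k"
  define J where "J = (\<lambda>i. (1::nat,i)) ` I1"
  define om where "om T = (\<lambda>i\<in>I1. if i \<in> T then 1 else (0::nat))" for T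
  define sT where "sT T = (V0 - (\<lambda>i. (0::nat,i)) ` T) \<union> (\<lambda>i. (1::nat, i)) ` T" for T
  define P' where "P' = Pow I1 - {{}}"
  define V0' where "V0' = V0 - {(0,1)}"
  define Gw where "Gw = (\<lambda>(x::'a, h::nat\<Rightarrow>'a). \<Prod>T\<in>Pow I1. f (x + (\<Sum>i\<in>T. h i)))"
  define B where "B = (UNIV::'a set) \<times> PiE I1 (\<lambda>_. UNIV::'a set)"
  define C where "C = PiE V0' (\<lambda>_. UNIV::'a set)"
  define A where "A = PiE (V0 \<union> J) (\<lambda>_. UNIV::'a set)"
  define F where "F = (\<lambda>x. f (\<Sum>v\<in>V0. x v) * (\<Prod>\<phi>\<in>Phi1 k d. f (\<Sum>v\<in>\<phi>. x v)))"
  have hV0: "V0 = (\<lambda>i. (0,i)) ` {1..k}" unfolding V0_def V0_set_def by auto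
  have finV0: "finite V0" using hV0 by simp
  have finJ: "finite J" unfolding J_def I1_def by simp
  have finI1: "finite I1" unfolding I1_def by simp
  have V0J: "V0 \<inter> J = {}" unfolding hV0 J_def by auto
  have in01: "(0,1) \<in> V0" using assms(1) unfolding hV0 by auto
  have I1V0: "i \<in> I1 \<Longrightarrow> (0,i) \<in> V0" for i using assms(1) unfolding hV0 I1_def by auto
  have phi_om: "phi_supp k d (om T) = sT T" if "T \<subseteq> I1" for T
  proof (rule set_eqI)
    fix v :: "nat \<times> nat"
    obtain a b where v: "v = (a,b)" by fastforce
    show "v \<in> phi_supp k d (om T) \<longleftrightarrow> v \<in> sT T"
      unfolding v phi_supp_def om_def sT_def hV0 using that assms(1) unfolding I1_def by (auto simp: subset_iff)
  qed
  have OmP: "({1..d+1} \<rightarrow>\<^sub>E {0, 1}) - {(\<lambda>i\<in>{1..d+1}. 0)} = om ` P'"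
  proof
    show "om ` P' \<subseteq> ({1..d+1} \<rightarrow>\<^sub>E {0, 1}) - {(\<lambda>i\<in>{1..d+1}. 0)}"
    proof
      fix w assume "w \<in> om ` P'"
      then obtain T where T: "T \<in> P'" "w = om T" by auto
      then obtain i where "i \<in> T" "T \<subseteq> I1" unfolding P'_def by auto
      then have "w i = 1" "i \<in> {1..d+1}" using T unfolding om_def I1_def by auto
      then have "w \<noteq> (\<lambda>i\<in>{1..d+1}. 0)" by (metis restrict_apply' zero_neq_one)
      moreover have "w \<in> {1..d+1} \<rightarrow>\<^sub>E {0, 1}" using T unfolding om_def I1_def by auto
      ultimately show "w \<in> ({1..d+1} \<rightarrow>\<^sub>E {0, 1}) - {(\<lambda>i\<in>{1..d+1}. 0)}" by simp
    qed
  next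
    show "({1..d+1} \<rightarrow>\<^sub>E {0, 1}) - {(\<lambda>i\<in>{1..d+1}. 0)} \<subseteq> om ` P'"
    proof
      fix w assume w: "w \<in> ({1..d+1} \<rightarrow>\<^sub>E {0, 1}) - {(\<lambda>i\<in>{1..d+1}. 0::nat)}"
      define T where "T = {i\<in>I1. w i = 1}"
      have "w = om T" using w unfolding om_def T_def I1_def
        by (auto simp: fun_eq_iff PiE_iff extensional_def)
      moreover have "T \<noteq> {}"
      proof
        assume "T = {}"
        then have "w = (\<lambda>i\<in>{1..d+1}. 0)" using w unfolding T_def I1_def
          by (auto simp: fun_eq_iff PiE_iff extensional_def)
        then show False using w by simp
      qed
      ultimately show "w \<in> om ` P'" unfolding P'_def T_def by auto
    qed
  qed
  have Phi: "Phi1 k d = sT ` P'"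
  proof -
    have "Phi1 k d = phi_supp k d ` om ` P'" unfolding Phi1_def OmP ..
    also have "\<dots> = sT ` P'" unfolding image_image
      by (rule image_cong[OF refl], rule phi_om) (auto simp: P'_def)
    finally show ?thesis .
  qed
  have inj: "inj_on sT P'"
  proof
    fix S T assume "S \<in> P'" "T \<in> P'" "sT S = sT T"
    then have "\<forall>i. ((1::nat,i) \<in> sT S) = ((1,i) \<in> sT T)" by simp
    then show "S = T" unfolding sT_def hV0 by auto
  qed
  have sys: "sys_vars V0 (Phi1 k d) = V0 \<union> J"
  proof -
    have "\<Union>(sT ` P') \<subseteq> V0 \<union> J" unfolding sT_def P'_def J_def by auto
    moreover have "J \<subseteq> \<Union>(sT ` P')"
    proof
      fix v assume "v \<in> J"
      then obtain i where i: "i \<in> I1" "v = (1,i)" unfolding J_def by auto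
      then have "{i} \<in> P'" "v \<in> sT {i}" unfolding P'_def sT_def by auto
      then show "v \<in> \<Union>(sT ` P')" by blast
    qed
    ultimately show ?thesis unfolding sys_vars_def Phi by blast
  qed
  have sum_sT: "(\<Sum>v\<in>sT T. x v) = (\<Sum>v\<in>V0. x v) + (\<Sum>i\<in>T. x (1,i) - x (0,i))"
    if T: "T \<subseteq> I1" for T and x :: "nat \<times> nat \<Rightarrow> 'a"
  proof -
    have finT: "finite T" using T finI1 finite_subset by auto
    have sub: "(\<lambda>i. (0::nat,i)) ` T \<subseteq> V0" using T I1V0 by auto
    have "(\<Sum>v\<in>sT T. x v) = (\<Sum>v\<in>V0 - (\<lambda>i. (0::nat,i)) ` T. x v) + (\<Sum>v\<in>(\<lambda>i. (1::nat, i)) ` T. x v)"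
      unfolding sT_def using finV0 finT by (intro sum.union_disjoint) (auto simp: hV0)
    also have "(\<Sum>v\<in>V0 - (\<lambda>i. (0::nat,i)) ` T. x v) = (\<Sum>v\<in>V0. x v) - (\<Sum>v\<in>(\<lambda>i. (0::nat,i)) ` T. x v)"
      using sub finV0 by (simp add: sum_diff)
    also have "(\<Sum>v\<in>(\<lambda>i. (0::nat,i)) ` T. x v) = (\<Sum>i\<in>T. x (0,i))"
      by (simp add: sum.reindex inj_on_def)
    also have "(\<Sum>v\<in>(\<lambda>i. (1::nat,i)) ` T. x v) = (\<Sum>i\<in>T. x (1,i))"
      by (simp add: sum.reindex inj_on_def)
    finally show ?thesis by (simp add: sum_subtractf algebra_simps)
  qed
  have PowI1: "Pow I1 = insert {} P'" "{} \<notin> P'" unfolding P'_def by auto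
  have finP': "finite P'" unfolding P'_def using finI1 by simp
  have FG: "F x = Gw (\<Sum>v\<in>V0. x v, \<lambda>i\<in>I1. x (1,i) - x (0,i))" for x
  proof -
    have "F x = f (\<Sum>v\<in>V0. x v) * (\<Prod>T\<in>P'. f (\<Sum>v\<in>sT T. x v))"
      unfolding F_def Phi using inj by (simp add: prod.reindex)
    also have "(\<Prod>T\<in>P'. f (\<Sum>v\<in>sT T. x v)) = (\<Prod>T\<in>P'. f ((\<Sum>v\<in>V0. x v) + (\<Sum>i\<in>T. (\<lambda>i\<in>I1. x (1,i) - x (0,i)) i)))"
    proof (rule prod.cong[OF refl])
      fix T assume "T \<in> P'"
      then have T: "T \<subseteq> I1" unfolding P'_def by auto
      then have "(\<Sum>i\<in>T. (\<lambda>i\<in>I1. x (1,i) - x (0,i)) i) = (\<Sum>i\<in>T. x (1,i) - x (0,i))"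
        by (intro sum.cong) auto
      then show "f (\<Sum>v\<in>sT T. x v) = f ((\<Sum>v\<in>V0. x v) + (\<Sum>i\<in>T. (\<lambda>i\<in>I1. x (1,i) - x (0,i)) i))"
        using sum_sT[OF T] by simp
    qed
    finally show ?thesis unfolding Gw_def using PowI1 finP' by simp
  qed
  define jf where "jf = (\<lambda>x::nat\<times>nat\<Rightarrow>'a. ((\<Sum>v\<in>V0. x v, \<lambda>i\<in>I1. x (1,i) - x (0,i)), restrict x V0'))"
  define bf where "bf = (\<lambda>(y::'a) (c::nat\<times>nat\<Rightarrow>'a) w. if w \<in> V0' then c w else y - (\<Sum>w\<in>V0'. c w))"
  define th where "th = (\<lambda>((y::'a, h::nat\<Rightarrow>'a), c::nat\<times>nat\<Rightarrow>'a). (\<lambda>v. if v \<in> V0 then bf y c v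
       else if v \<in> J then bf y c (0, snd v) + h (snd v) else undefined))"
  have sumV0: "(\<Sum>v\<in>V0. x v) = x (0,1) + (\<Sum>v\<in>V0'. x v)" for x :: "nat\<times>nat\<Rightarrow>'a"
    unfolding V0'_def using finV0 in01 by (simp add: sum.remove)
  have bij: "(\<Sum>x\<in>A. g x) = (\<Sum>z\<in>B \<times> C. g' z)"
    if eq: "\<And>x. x \<in> A \<Longrightarrow> g' (jf x) = g x" for g g'
  proof (rule sum.reindex_bij_witness[where j = jf and i = th])
    fix x assume x: "x \<in> A"
    have bx: "bf (\<Sum>v\<in>V0. x v) (restrict x V0') w = x w" if "w \<in> V0" for w
      using that sumV0[of x] unfolding bf_def V0'_def by auto
    show "th (jf x) = x"
    proof
      fix v
      show "th (jf x) v = x v"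
      proof (cases "v \<in> V0")
        case True then show ?thesis unfolding th_def jf_def using bx by simp
      next
        case False
        show ?thesis
        proof (cases "v \<in> J")
          case True
          then obtain i where i: "i \<in> I1" "v = (1,i)" unfolding J_def by auto
          then show ?thesis using False True bx[OF I1V0[OF i(1)]] unfolding th_def jf_def by simp
        next
          case nJ: False
          have "x v = undefined" using False nJ x unfolding A_def by (metis PiE_E Un_iff)
          then show ?thesis using False nJ unfolding th_def jf_def by simp
        qed
      qed
    qed
    show "jf x \<in> B \<times> C" unfolding jf_def B_def C_def by auto
    show "g' (jf x) = g x" using eq x .
  next
    fix z assume z: "z \<in> B \<times> C"
    obtain y h c where zz: "z = ((y,h),c)" by (metis prod.collapse)
    have h: "h \<in> PiE I1 (\<lambda>_. UNIV)" and c: "c \<in> C" using z zz unfolding B_def by auto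
    have t0: "th z w = bf y c w" if "w \<in> V0" for w using that zz unfolding th_def by simp
    have t1: "th z (1,i) = bf y c (0,i) + h i" if "i \<in> I1" for i
      using that zz V0J unfolding th_def J_def by auto
    have s: "(\<Sum>v\<in>V0. th z v) = y"
    proof -
      have "(\<Sum>v\<in>V0. th z v) = th z (0,1) + (\<Sum>v\<in>V0'. th z v)" by (rule sumV0)
      also have "(\<Sum>v\<in>V0'. th z v) = (\<Sum>v\<in>V0'. c v)"
        by (rule sum.cong[OF refl]) (simp add: t0 V0'_def bf_def)
      also have "th z (0,1) = y - (\<Sum>v\<in>V0'. c v)" using t0[OF in01] unfolding bf_def V0'_def by simp
      finally show ?thesis by simp
    qed
    have d: "(\<lambda>i\<in>I1. th z (1,i) - th z (0,i)) = h"
    proof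
      fix i show "(\<lambda>i\<in>I1. th z (1,i) - th z (0,i)) i = h i"
        using h t1 t0[OF I1V0] by (cases "i \<in> I1") (auto simp: PiE_iff extensional_def)
    qed
    have r: "restrict (th z) V0' = c"
    proof
      fix w show "restrict (th z) V0' w = c w"
      proof (cases "w \<in> V0'")
        case True then show ?thesis using t0[of w] unfolding bf_def V0'_def by auto
      next
        case False
        then have "c w = undefined" using c unfolding C_def by (metis PiE_E)
        then show ?thesis using False by simp
      qed
    qed
    show "jf (th z) = z" unfolding jf_def using s d r zz by simp
    show "th z \<in> A" unfolding A_def
      by (auto simp: PiE_iff extensional_def th_def zz)
  qed
  have finA: "finite A" unfolding A_def using finV0 finJ by (simp add: finite_PiE)
  have finB: "finite B" unfolding B_def using finI1 by (simp add: finite_PiE)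
  have finC: "finite C" unfolding C_def using finV0 by (simp add: finite_PiE V0'_def)
  have Cne: "C \<noteq> {}" unfolding C_def by (simp add: PiE_eq_empty_iff)
  have cardC: "card C > 0" using finC Cne by (simp add: card_gt_0_iff)
  have sumF: "(\<Sum>x\<in>A. F x) = real (card C) * (\<Sum>p\<in>B. Gw p)"
  proof -
    have "(\<Sum>x\<in>A. F x) = (\<Sum>z\<in>B \<times> C. Gw (fst z))" by (rule bij) (simp add: FG jf_def)
    also have "\<dots> = (\<Sum>p\<in>B. \<Sum>c\<in>C. Gw p)" 
      by (subst sum.cartesian_product) (simp add: case_prod_beta)
    finally show ?thesis by (simp add: sum_distrib_left)
  qed
  have cardA: "real (card A) = real (card B) * real (card C)"
  proof -
    have "(\<Sum>x\<in>A. (1::real)) = (\<Sum>z\<in>B \<times> C. 1)" by (rule bij) simp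
    then show ?thesis by (simp add: card_cartesian_product)
  qed
  have avgeq: "avg A F = avg B Gw"
    unfolding avg_def sumF cardA using cardC by simp
  have Gnn: "avg B Gw \<ge> 0"
  proof -
    have I1ins: "I1 = insert (d+1) {1..d}" unfolding I1_def by auto
    have "0 \<le> (\<Sum>p\<in>B. Gw p)" unfolding B_def Gw_def I1ins
      by (rule gowers_sum_nonneg) auto
    then show ?thesis unfolding avg_def by simp
  qed
  have gn: "gowers_norm (d + 1) f ^ (2 ^ (d + 1)) = avg B Gw"
    unfolding gowers_norm_def B_def Gw_def I1_def
    using powr_pow_cancel Gnn[unfolded B_def Gw_def I1_def] by blast
  have fb: "\<bar>f y\<bar> \<le> 1" for y using assms(3) by (simp add: abs_le_iff)
  have mem: "avg A F \<in> {avg (PiE (sys_vars V0 (Phi1 k d)) (\<lambda>_. UNIV))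
        (\<lambda>x. f (\<Sum>v\<in>V0. x v) * (\<Prod>\<phi>\<in>Phi1 k d. u \<phi> (\<Sum>v\<in>\<phi>. x v)))
      | u :: (nat\<times>nat) set \<Rightarrow> 'a \<Rightarrow> real. \<forall>\<phi>\<in>Phi1 k d. \<forall>y. u \<phi> y \<in> {-1..1}}"
    unfolding sys A_def F_def using assms(3) by (intro CollectI exI[where x="\<lambda>_. f"]) auto
  have bdd: "bdd_above {avg (PiE (sys_vars V0 (Phi1 k d)) (\<lambda>_. UNIV))
        (\<lambda>x. f (\<Sum>v\<in>V0. x v) * (\<Prod>\<phi>\<in>Phi1 k d. u \<phi> (\<Sum>v\<in>\<phi>. x v)))
      | u :: (nat\<times>nat) set \<Rightarrow> 'a \<Rightarrow> real. \<forall>\<phi>\<in>Phi1 k d. \<forall>y. u \<phi> y \<in> {-1..1}}"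
  proof (rule bdd_aboveI[where M=1], safe)
    fix u :: "(nat\<times>nat) set \<Rightarrow> 'a \<Rightarrow> real" assume u: "\<forall>\<phi>\<in>Phi1 k d. \<forall>y. u \<phi> y \<in> {-1..1}"
    show "avg (PiE (sys_vars V0 (Phi1 k d)) (\<lambda>_. UNIV))
        (\<lambda>x. f (\<Sum>v\<in>V0. x v) * (\<Prod>\<phi>\<in>Phi1 k d. u \<phi> (\<Sum>v\<in>\<phi>. x v))) \<le> 1"
    proof (rule avg_le_1)
      show "finite (PiE (sys_vars V0 (Phi1 k d)) (\<lambda>_. UNIV::'a set))"
        unfolding sys using finV0 finJ by (simp add: finite_PiE)
      fix x :: "nat\<times>nat \<Rightarrow> 'a"
      have "\<bar>\<Prod>\<phi>\<in>Phi1 k d. u \<phi> (\<Sum>v\<in>\<phi>. x v)\<bar> \<le> 1"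
        unfolding abs_prod using u by (intro prod_le_1) (auto simp: abs_le_iff)
      then have "\<bar>f (\<Sum>v\<in>V0. x v) * (\<Prod>\<phi>\<in>Phi1 k d. u \<phi> (\<Sum>v\<in>\<phi>. x v))\<bar> \<le> 1"
        unfolding abs_mult using fb by (intro mult_le_one) auto
      then show "f (\<Sum>v\<in>V0. x v) * (\<Prod>\<phi>\<in>Phi1 k d. u \<phi> (\<Sum>v\<in>\<phi>. x v)) \<le> 1" by simp
    qed
  qed
  have "avg A F \<le> box_norm (V0_set k) (Phi1 k d) f"
    unfolding box_norm_def V0_def[symmetric] by (rule cSup_upper[OF mem bdd])
  then show ?thesis using gn avgeq by simp
qed

end
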